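(* Let $\mathfrak g$ be a compact simple Lie algebra with $\dim\mathfrak g\ge8$, and let $\Theta:\Lambda^3\mathfrak g\to\mathfrak g\otimes\mathfrak g^\perp$, $T\mapsto\sum_i e_i\otimes\Pi_{\mathfrak g^\perp}(e_i\lrcorner T)$, where $(e_i)$ is an orthonormal basis of $\mathfrak g$ and $\Pi_{\mathfrak g^\perp}$ the orthogonal projection $\Lambda^2\mathfrak g\to\mathfrak g^\perp$. Then $\ker\Theta=\mathbb R\,\omega_{\mathfrak g}$.
   Context: $\mathfrak g$ compact simple real Lie algebra, $B$ its Killing form, inner product $\langle\cdot,\cdot\rangle:=-B$ extended to $\Lambda^k\mathfrak g$ and used to identify $\mathfrak g\cong\mathfrak g^*$ (so $e_i\lrcorner T\in\Lambda^2\mathfrak g$); $\omega_{\mathfrak g}(X,Y,Z)=B(X,[Y,Z])$; $\mathfrak g^\perp:=\ker(\Lambda^2\mathfrak g\to\mathfrak g,\ v\wedge w\mapsto[v,w])$. *)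

theory Defs
  imports "HOL-Analysis.Analysis"
begin

text \<open>A finite-dimensional real Lie algebra: the underlying vector space is a
  Euclidean-space type (used only for its real vector space structure and
  finite dimension; its built-in inner product plays no role beyond computing
  traces), with a bracket br.\<close>

definition lie_algebra :: "('a::euclidean_space \<Rightarrow> 'a \<Rightarrow> 'a) \<Rightarrow> bool" where
  "lie_algebra br \<longleftrightarrow>
     (\<forall>x. linear (br x)) \<and> (\<forall>y. linear (\<lambda>x. br x y)) \<and>
     (\<forall>x. br x x = 0) \<and>
     (\<forall>x y z. br x (br y z) + br y (br z x) + br z (br x y) = 0)"

definition trace_map :: "('a::euclidean_space \<Rightarrow> 'a) \<Rightarrow> real" where
  "trace_map f = (\<Sum>b\<in>Basis. f b \<bullet> b)"

definition killing :: "('a::euclidean_space \<Rightarrow> 'a \<Rightarrow> 'a) \<Rightarrow> 'a \<Rightarrow> 'a \<Rightarrow> real" where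
  "killing br x y = trace_map (\<lambda>z. br x (br y z))"

definition lie_ideal :: "('a::euclidean_space \<Rightarrow> 'a \<Rightarrow> 'a) \<Rightarrow> 'a set \<Rightarrow> bool" where
  "lie_ideal br I \<longleftrightarrow> subspace I \<and> (\<forall>x\<in>I. \<forall>y. br x y \<in> I)"

definition compact_simple :: "('a::euclidean_space \<Rightarrow> 'a \<Rightarrow> 'a) \<Rightarrow> bool" where
  "compact_simple br \<longleftrightarrow> lie_algebra br \<and>
     (\<exists>x y. br x y \<noteq> 0) \<and>
     (\<forall>I. lie_ideal br I \<longrightarrow> I = {0} \<or> I = UNIV) \<and>
     (\<forall>x. x \<noteq> 0 \<longrightarrow> killing br x x < 0)"

definition ip :: "('a::euclidean_space \<Rightarrow> 'a \<Rightarrow> 'a) \<Rightarrow> 'a \<Rightarrow> 'a \<Rightarrow> real" where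
  "ip br x y = - killing br x y"

definition orthonormal_basis :: "('a::euclidean_space \<Rightarrow> 'a \<Rightarrow> 'a) \<Rightarrow> (nat \<Rightarrow> 'a) \<Rightarrow> bool" where
  "orthonormal_basis br e \<longleftrightarrow>
     (\<forall>i<DIM('a). \<forall>j<DIM('a). ip br (e i) (e j) = (if i = j then 1 else 0))"

text \<open>Via g = g*, Lambda^k g is identified with alternating k-linear forms on g.\<close>
definition alt2 :: "('a::euclidean_space \<Rightarrow> 'a \<Rightarrow> real) \<Rightarrow> bool" where
  "alt2 b \<longleftrightarrow> (\<forall>x. linear (b x)) \<and> (\<forall>y. linear (\<lambda>x. b x y)) \<and> (\<forall>x. b x x = 0)"

definition alt3 :: "('a::euclidean_space \<Rightarrow> 'a \<Rightarrow> 'a \<Rightarrow> real) \<Rightarrow> bool" where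
  "alt3 T \<longleftrightarrow> (\<forall>x. alt2 (T x)) \<and> (\<forall>y z. linear (\<lambda>x. T x y z)) \<and>
     (\<forall>x y z. T x y z = - T y x z)"

text \<open>Inner product on Lambda^2 g induced by <.,.> (up to an irrelevant factor 2).\<close>
definition ip2 :: "(nat \<Rightarrow> 'a::euclidean_space) \<Rightarrow> ('a \<Rightarrow> 'a \<Rightarrow> real) \<Rightarrow> ('a \<Rightarrow> 'a \<Rightarrow> real) \<Rightarrow> real" where
  "ip2 e a b = (\<Sum>j<DIM('a). \<Sum>k<DIM('a). a (e j) (e k) * b (e j) (e k))"

text \<open>g-perp: kernel of Lambda^2 g -> g, v /\ w |-> [v,w].  The bivector of the
  form b is sum_{j<k} b(e_j,e_k) e_j /\ e_k.\<close>
definition gperp :: "('a::euclidean_space \<Rightarrow> 'a \<Rightarrow> 'a) \<Rightarrow> (nat \<Rightarrow> 'a) \<Rightarrow> ('a \<Rightarrow> 'a \<Rightarrow> real) set" where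
  "gperp br e = {b. alt2 b \<and> (\<Sum>j<DIM('a). \<Sum>k<DIM('a). b (e j) (e k) *\<^sub>R br (e j) (e k)) = 0}"

definition proj_gperp :: "('a::euclidean_space \<Rightarrow> 'a \<Rightarrow> 'a) \<Rightarrow> (nat \<Rightarrow> 'a) \<Rightarrow> ('a \<Rightarrow> 'a \<Rightarrow> real) \<Rightarrow> ('a \<Rightarrow> 'a \<Rightarrow> real)" where
  "proj_gperp br e b = (THE c. c \<in> gperp br e \<and>
      (\<forall>d\<in>gperp br e. ip2 e (\<lambda>x y. b x y - c x y) d = 0))"

text \<open>Theta(T) = sum_i e_i (x) Pi(e_i -| T), an element of g (x) g-perp, viewed
  as the trilinear form (x,y,z) |-> sum_i <e_i,x> Pi(e_i -| T)(y,z).\<close>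
definition Theta :: "('a::euclidean_space \<Rightarrow> 'a \<Rightarrow> 'a) \<Rightarrow> (nat \<Rightarrow> 'a) \<Rightarrow> ('a \<Rightarrow> 'a \<Rightarrow> 'a \<Rightarrow> real) \<Rightarrow> ('a \<Rightarrow> 'a \<Rightarrow> 'a \<Rightarrow> real)" where
  "Theta br e T = (\<lambda>x y z. \<Sum>i<DIM('a). ip br (e i) x * proj_gperp br e (T (e i)) y z)"

definition omega_g :: "('a::euclidean_space \<Rightarrow> 'a \<Rightarrow> 'a) \<Rightarrow> 'a \<Rightarrow> 'a \<Rightarrow> 'a \<Rightarrow> real" where
  "omega_g br x y z = killing br x (br y z)"

end

theory Submission
  imports Defs
begin


lemma trace_cyclic:
  fixes f g :: "'a::euclidean_space \<Rightarrow> 'a"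
  assumes "linear f" "linear g"
  shows "trace_map (\<lambda>z. f (g z)) = trace_map (\<lambda>z. g (f z))"
proof -
  have "trace_map (\<lambda>z. f (g z)) = (\<Sum>b\<in>Basis. \<Sum>c\<in>Basis. (g b \<bullet> c) * (f c \<bullet> b))"
    unfolding trace_map_def
  proof (rule sum.cong[OF refl])
    fix b :: 'a
    have "f (g b) = f (\<Sum>c\<in>Basis. (g b \<bullet> c) *\<^sub>R c)" by (simp add: euclidean_representation)
    also have "\<dots> = (\<Sum>c\<in>Basis. (g b \<bullet> c) *\<^sub>R f c)" using assms(1) by (simp add: linear_sum linear_scale)
    finally show "f (g b) \<bullet> b = (\<Sum>c\<in>Basis. (g b \<bullet> c) * (f c \<bullet> b))"
      by (simp add: inner_sum_left)
  qed
  also have "\<dots> = (\<Sum>c\<in>Basis. \<Sum>b\<in>Basis. (f c \<bullet> b) * (g b \<bullet> c))"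
    by (subst sum.swap) (simp add: mult.commute)
  also have "\<dots> = trace_map (\<lambda>z. g (f z))"
    unfolding trace_map_def
  proof (rule sum.cong[OF refl])
    fix c :: 'a
    have "g (f c) = g (\<Sum>b\<in>Basis. (f c \<bullet> b) *\<^sub>R b)" by (simp add: euclidean_representation)
    also have "\<dots> = (\<Sum>b\<in>Basis. (f c \<bullet> b) *\<^sub>R g b)" using assms(2) by (simp add: linear_sum linear_scale)
    finally show "(\<Sum>b\<in>Basis. (f c \<bullet> b) * (g b \<bullet> c)) = g (f c) \<bullet> c"
      by (simp add: inner_sum_left)
  qed
  finally show ?thesis .
qed

lemma trace_diff: "trace_map (\<lambda>z. f z - g z) = trace_map f - trace_map g"
  by (simp add: trace_map_def inner_diff_left sum_subtractf)
lemma trace_add: "trace_map (\<lambda>z. f z + g z) = trace_map f + trace_map g"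
  by (simp add: trace_map_def inner_add_left sum.distrib)
lemma trace_scale: "trace_map (\<lambda>z. c *\<^sub>R f z) = c * trace_map f"
  by (simp add: trace_map_def sum_distrib_left)

locale CS =
  fixes br :: "'a::euclidean_space \<Rightarrow> 'a \<Rightarrow> 'a" and e :: "nat \<Rightarrow> 'a"
  assumes cs: "compact_simple br" and onb: "orthonormal_basis br e"
begin

lemma lie: "lie_algebra br" using cs by (simp add: compact_simple_def)
lemma lin_r: "linear (br x)" using lie by (simp add: lie_algebra_def)
lemma lin_l: "linear (\<lambda>x. br x y)" using lie by (simp add: lie_algebra_def)
lemma br_self[simp]: "br x x = 0" using lie by (simp add: lie_algebra_def)
lemma jac: "br x (br y z) + br y (br z x) + br z (br x y) = 0" using lie by (simp add: lie_algebra_def)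

lemma br_add_r: "br x (y + z) = br x y + br x z" using lin_r linear_add by blast
lemma br_add_l: "br (x + y) z = br x z + br y z" using linear_add[OF lin_l] by blast
lemma br_scale_r: "br x (c *\<^sub>R y) = c *\<^sub>R br x y" using lin_r linear_scale by blast
lemma br_scale_l: "br (c *\<^sub>R x) y = c *\<^sub>R br x y" using linear_scale[OF lin_l] by blast
lemma br_diff_r: "br x (y - z) = br x y - br x z" using lin_r linear_diff by blast
lemma br_diff_l: "br (x - y) z = br x z - br y z" using linear_diff[OF lin_l] by blast
lemma br_0_r[simp]: "br x 0 = 0" using lin_r linear_0 by blast
lemma br_0_l[simp]: "br 0 x = 0" using linear_0[OF lin_l] by blast
lemma br_sum_r: "br x (sum f S) = (\<Sum>i\<in>S. br x (f i))" using lin_r linear_sum by blast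
lemma br_sum_l: "br (sum f S) y = (\<Sum>i\<in>S. br (f i) y)" using linear_sum[OF lin_l] by blast

lemma br_anti: "br x y = - br y x"
proof -
  have "0 = br (x + y) (x + y)" by simp
  also have "\<dots> = br x x + br y x + (br x y + br y y)" by (simp only: br_add_l br_add_r)
  finally have "br x y + br y x = 0" by (simp add: algebra_simps)
  thus ?thesis by (simp add: eq_neg_iff_add_eq_0)
qed

lemma br_br: "br (br a b) z = br a (br b z) - br b (br a z)"
proof -
  have j: "br a (br b z) + br b (br z a) + br z (br a b) = 0" by (rule jac)
  have 1: "br b (br z a) = - br b (br a z)" using br_anti[of z a] lin_r linear_neg by metis
  have 2: "br z (br a b) = - br (br a b) z" by (rule br_anti)
  from j show ?thesis unfolding 1 2 by (simp add: algebra_simps)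
qed

end

context CS begin

lemma lin_rr: "linear (\<lambda>w. br x (br z w))"
  using linear_compose[OF lin_r lin_r] by (simp add: o_def)

lemma kill_lin_r: "linear (killing br x)"
  unfolding linear_iff killing_def
  by (simp add: br_add_l br_scale_l br_add_r br_scale_r trace_add trace_scale)

lemma kill_lin_l: "linear (\<lambda>x. killing br x y)"
  unfolding linear_iff killing_def
  by (simp add: br_add_l br_scale_l trace_add trace_scale)

lemma kill_sym: "killing br x y = killing br y x"
  unfolding killing_def using trace_cyclic[OF lin_r lin_r] by blast

lemma tr_ad_br: "trace_map (br (br a b)) = 0"
proof -
  have "trace_map (br (br a b)) = trace_map (\<lambda>z. br a (br b z) - br b (br a z))"
    unfolding trace_map_def by (simp add: br_br)
  also have "\<dots> = 0" unfolding trace_diff using trace_cyclic[OF lin_r lin_r, of a b] by simp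
  finally show ?thesis .
qed

lemma kill_inv: "killing br x (br y z) = killing br (br x y) z"
proof -
  have c: "trace_map (\<lambda>w. br y (br x (br z w))) = trace_map (\<lambda>w. br x (br z (br y w)))"
    using trace_cyclic[OF lin_r lin_rr, of y x z] by simp
  have "killing br x (br y z) = trace_map (\<lambda>w. br x (br y (br z w)) - br x (br z (br y w)))"
    unfolding killing_def by (simp add: br_br br_diff_r)
  also have "\<dots> = trace_map (\<lambda>w. br x (br y (br z w)) - br y (br x (br z w)))"
    unfolding trace_diff c ..
  also have "\<dots> = killing br (br x y) z"
    unfolding killing_def by (simp add: br_br)
  finally show ?thesis .
qed

lemma kill_neg: "x \<noteq> 0 \<Longrightarrow> killing br x x < 0" using cs by (simp add: compact_simple_def)

lemma ip_lin_r: "linear (ip br x)"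
  using linear_compose[OF kill_lin_r[of x] linear_uminus] by (simp add: ip_def[abs_def] o_def)
lemma ip_lin_l: "linear (\<lambda>x. ip br x y)"
  using linear_compose[OF kill_lin_l[of y] linear_uminus] by (simp add: ip_def[abs_def] o_def)
lemma ip_bil: "bilinear (ip br)"
  unfolding bilinear_def using ip_lin_r ip_lin_l by (simp add: eta_contract_eq)
lemma ip_sym: "ip br x y = ip br y x" by (simp add: ip_def kill_sym)
lemma ip_inv: "ip br x (br y z) = ip br (br x y) z" by (simp add: ip_def kill_inv)
lemma ip_pos: "x \<noteq> 0 \<Longrightarrow> ip br x x > 0" using kill_neg by (simp add: ip_def)
lemma ip_ge0: "ip br x x \<ge> 0" using ip_pos[of x] by (cases "x = 0") (auto simp: ip_def killing_def trace_map_def)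
lemma ip_0_r[simp]: "ip br x 0 = 0" using ip_lin_r linear_0 by blast
lemma ip_0_l[simp]: "ip br 0 x = 0" using linear_0[OF ip_lin_l] by blast
lemma ip_add_r: "ip br x (y + z) = ip br x y + ip br x z" using ip_lin_r linear_add by blast
lemma ip_add_l: "ip br (x + y) z = ip br x z + ip br y z" using linear_add[OF ip_lin_l] by blast
lemma ip_scale_r: "ip br x (c *\<^sub>R y) = c * ip br x y" using ip_lin_r linear_scale by fastforce
lemma ip_scale_l: "ip br (c *\<^sub>R x) y = c * ip br x y" using linear_scale[OF ip_lin_l] by fastforce
lemma ip_diff_r: "ip br x (y - z) = ip br x y - ip br x z" using ip_lin_r linear_diff by blast
lemma ip_diff_l: "ip br (x - y) z = ip br x z - ip br y z" using linear_diff[OF ip_lin_l] by blast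
lemma ip_sum_r: "ip br x (sum f S) = (\<Sum>i\<in>S. ip br x (f i))" using ip_lin_r linear_sum by blast
lemma ip_sum_l: "ip br (sum f S) y = (\<Sum>i\<in>S. ip br (f i) y)" using linear_sum[OF ip_lin_l] by blast

lemma ip_nondeg: "(\<And>z. ip br w z = 0) \<Longrightarrow> w = 0"
  using ip_pos by force

lemma center0: "(\<And>y. br x y = 0) \<Longrightarrow> x = 0"
proof (rule ccontr)
  assume h: "\<And>y. br x y = 0" "x \<noteq> 0"
  have "killing br x x = 0" unfolding killing_def trace_map_def by (simp add: h)
  with kill_neg[OF h(2)] show False by simp
qed

lemma tr_ad_lin: "linear (\<lambda>u. trace_map (br u))"
  unfolding linear_iff trace_map_def by (simp add: br_add_l br_scale_l inner_add_left sum.distrib sum_distrib_left)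

end

context CS begin


lemma onb_ip: "i < DIM('a) \<Longrightarrow> j < DIM('a) \<Longrightarrow> ip br (e i) (e j) = (if i = j then 1 else 0)"
  using onb unfolding orthonormal_basis_def by blast

lemma coef: "j < DIM('a) \<Longrightarrow> ip br (e j) (\<Sum>i<DIM('a). c i *\<^sub>R e i) = c j"
proof -
  assume j: "j < DIM('a)"
  have "ip br (e j) (\<Sum>i<DIM('a). c i *\<^sub>R e i) = (\<Sum>i<DIM('a). c i * (if j = i then 1 else 0))"
    unfolding ip_sum_r ip_scale_r using j by (intro sum.cong) (auto simp add: onb_ip)
  also have "\<dots> = c j" using j by (simp add: if_distrib cong: if_cong)
  finally show ?thesis .
qed

lemma inj_e: "inj_on e {..<DIM('a)}"
proof (rule inj_onI)
  fix i j assume "i \<in> {..<DIM('a)}" "j \<in> {..<DIM('a)}" "e i = e j"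
  thus "i = j" using onb_ip[of i j] onb_ip[of j j] by (auto split: if_splits)
qed

lemma indep_e: "independent (e ` {..<DIM('a)})"
proof -
  have "\<not> dependent (e ` {..<DIM('a)})"
  proof
    assume "dependent (e ` {..<DIM('a)})"
    then obtain u where u: "\<exists>v\<in>e ` {..<DIM('a)}. u v \<noteq> 0" "(\<Sum>v\<in>e ` {..<DIM('a)}. u v *\<^sub>R v) = 0"
      using dependent_finite[of "e ` {..<DIM('a)}"] by auto
    have s: "(\<Sum>i<DIM('a). u (e i) *\<^sub>R e i) = 0" using u(2) by (simp add: sum.reindex[OF inj_e])
    from u(1) obtain j where j: "j < DIM('a)" "u (e j) \<noteq> 0" by auto
    have "ip br (e j) (\<Sum>i<DIM('a). u (e i) *\<^sub>R e i) = u (e j)" by (rule coef[OF j(1)])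
    with s j show False by simp
  qed
  thus ?thesis by simp
qed

lemma span_e: "span (e ` {..<DIM('a)}) = UNIV"
proof -
  have "card (e ` {..<DIM('a)}) = DIM('a)" using card_image[OF inj_e] by simp
  hence "UNIV \<subseteq> span (e ` {..<DIM('a)})"
    using card_ge_dim_independent[of "e ` {..<DIM('a)}" UNIV] indep_e by simp
  thus ?thesis by auto
qed

lemma expand: "x = (\<Sum>i<DIM('a). ip br (e i) x *\<^sub>R e i)"
proof -
  have "x \<in> span (e ` {..<DIM('a)})" using span_e by simp
  then obtain u where "x = (\<Sum>v\<in>e ` {..<DIM('a)}. u v *\<^sub>R v)"
    using span_finite[of "e ` {..<DIM('a)}"] by auto
  hence x: "x = (\<Sum>i<DIM('a). u (e i) *\<^sub>R e i)" by (simp add: sum.reindex[OF inj_e])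
  have eq: "(\<Sum>i<DIM('a). ip br (e i) x *\<^sub>R e i) = (\<Sum>i<DIM('a). u (e i) *\<^sub>R e i)"
  proof (rule sum.cong[OF refl])
    fix i assume "i \<in> {..<DIM('a)}"
    hence "ip br (e i) (\<Sum>i<DIM('a). u (e i) *\<^sub>R e i) = u (e i)" by (simp add: coef)
    moreover have "ip br (e i) x = ip br (e i) (\<Sum>i<DIM('a). u (e i) *\<^sub>R e i)" using x by (rule arg_cong)
    ultimately show "ip br (e i) x *\<^sub>R e i = u (e i) *\<^sub>R e i" by simp
  qed
  show ?thesis by (rule trans[OF x sym[OF eq]])
qed

lemma lin_expand: "linear f \<Longrightarrow> f x = (\<Sum>i<DIM('a). ip br (e i) x *\<^sub>R f (e i))"
proof -
  assume l: "linear f"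
  have "f x = f (\<Sum>i<DIM('a). ip br (e i) x *\<^sub>R e i)" using expand[of x] by (rule arg_cong)
  also have "\<dots> = (\<Sum>i<DIM('a). ip br (e i) x *\<^sub>R f (e i))" using l by (simp add: linear_sum linear_scale)
  finally show ?thesis .
qed

lemma alt2_expand:
  assumes "alt2 b"
  shows "b x y = (\<Sum>j<DIM('a). \<Sum>k<DIM('a). ip br (e j) x * ip br (e k) y * b (e j) (e k))"
proof -
  have l1: "linear (\<lambda>x. b x y)" using assms by (simp add: alt2_def)
  have l2: "\<And>x. linear (b x)" using assms by (simp add: alt2_def)
  have "b x y = (\<Sum>j<DIM('a). ip br (e j) x * b (e j) y)"
    using lin_expand[OF l1, of x] by (simp only: scaleR_conv_of_real of_real_def[symmetric]) simp
  also have "\<dots> = (\<Sum>j<DIM('a). ip br (e j) x * (\<Sum>k<DIM('a). ip br (e k) y * b (e j) (e k)))"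
  proof (rule sum.cong[OF refl])
    fix j show "ip br (e j) x * b (e j) y = ip br (e j) x * (\<Sum>k<DIM('a). ip br (e k) y * b (e j) (e k))"
      using lin_expand[OF l2[of "e j"], of y] by simp
  qed
  finally show ?thesis by (simp add: sum_distrib_left mult.assoc)
qed

lemma alt2_eq:
  assumes "alt2 b" "alt2 c" "\<And>j k. j < DIM('a) \<Longrightarrow> k < DIM('a) \<Longrightarrow> b (e j) (e k) = c (e j) (e k)"
  shows "b = c"
proof (intro ext)
  fix x y show "b x y = c x y"
    by (simp add: alt2_expand[OF assms(1), of x y] alt2_expand[OF assms(2), of x y] assms(3))
qed

end

context CS begin

definition mu :: "('a \<Rightarrow> 'a \<Rightarrow> real) \<Rightarrow> 'a" where
  "mu b = (\<Sum>j<DIM('a). \<Sum>k<DIM('a). b (e j) (e k) *\<^sub>R br (e j) (e k))"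
definition mus :: "'a \<Rightarrow> 'a \<Rightarrow> 'a \<Rightarrow> real" where
  "mus v = (\<lambda>y z. ip br v (br y z))"

lemma gperp_iff: "d \<in> gperp br e \<longleftrightarrow> alt2 d \<and> mu d = 0"
  by (simp add: gperp_def mu_def)

lemma mus_alt2: "alt2 (mus v)"
proof -
  have "linear (\<lambda>z. ip br v (br y z))" for y
    using linear_compose[OF lin_r ip_lin_r] by (simp add: o_def)
  moreover have "linear (\<lambda>y. ip br v (br y z))" for z
    using linear_compose[OF lin_l ip_lin_r] by (simp add: o_def)
  ultimately show ?thesis unfolding alt2_def mus_def by simp
qed

lemma alt2_0: "alt2 (\<lambda>x y. 0)" by (simp add: alt2_def linear_zero)

lemma alt2_diff: "alt2 b \<Longrightarrow> alt2 c \<Longrightarrow> alt2 (\<lambda>x y. b x y - c x y)"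
  unfolding alt2_def by (auto intro: linear_compose_sub)

lemma mu_diff: "mu (\<lambda>x y. b x y - c x y) = mu b - mu c"
  by (simp add: mu_def scaleR_diff_left sum_subtractf)

lemma ip2_diff: "ip2 e (\<lambda>x y. a x y - b x y) d = ip2 e a d - ip2 e b d"
  by (simp add: ip2_def left_diff_distrib sum_subtractf)

lemma ip2_mus: "ip2 e (mus v) d = ip br v (mu d)"
  by (simp add: ip2_def mus_def mu_def ip_sum_r ip_scale_r mult.commute)

lemma ip2_self_0:
  assumes "ip2 e d d = 0"
  shows "\<forall>j<DIM('a). \<forall>k<DIM('a). d (e j) (e k) = 0"
proof -
  have "(\<Sum>j<DIM('a). \<Sum>k<DIM('a). d (e j) (e k) * d (e j) (e k)) = 0"
    using assms by (simp add: ip2_def)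
  hence "\<forall>j\<in>{..<DIM('a)}. (\<Sum>k<DIM('a). d (e j) (e k) * d (e j) (e k)) = 0"
    by (subst (asm) sum_nonneg_eq_0_iff) (auto intro: sum_nonneg)
  hence "\<forall>j\<in>{..<DIM('a)}. \<forall>k\<in>{..<DIM('a)}. d (e j) (e k) * d (e j) (e k) = 0"
    by (subst (asm) sum_nonneg_eq_0_iff) auto
  thus ?thesis by simp
qed

definition L :: "'a \<Rightarrow> 'a" where "L v = mu (mus v)"

lemma L_lin: "linear L"
  unfolding linear_iff L_def mu_def mus_def
  by (simp add: ip_add_l ip_scale_l scaleR_add_left sum.distrib scaleR_sum_right)

lemma L_inj: "inj L"
proof -
  have "v = 0" if h: "L v = 0" for v
  proof -
    have "ip2 e (mus v) (mus v) = 0" using h by (simp add: ip2_mus L_def)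
    hence z: "\<forall>j<DIM('a). \<forall>k<DIM('a). mus v (e j) (e k) = 0" by (rule ip2_self_0)
    have "mus v = (\<lambda>x y. 0)" by (rule alt2_eq[OF mus_alt2 alt2_0]) (simp add: z)
    hence "\<forall>y z. ip br (br v y) z = 0" by (simp add: mus_def ip_inv fun_eq_iff)
    hence "\<forall>y. br v y = 0" using ip_nondeg by blast
    thus "v = 0" using center0 by blast
  qed
  thus ?thesis using linear_inj_iff_eq_0[OF L_lin] by blast
qed

lemma L_surj: "\<exists>v. L v = w"
  using linear_injective_imp_surjective[OF L_lin L_inj] by (metis surjD)

lemma proj_char:
  assumes b: "alt2 b" and c: "c \<in> gperp br e" and o: "\<forall>d\<in>gperp br e. ip2 e (\<lambda>x y. b x y - c x y) d = 0"
  shows "proj_gperp br e b = c"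
  unfolding proj_gperp_def
proof (rule the_equality)
  show "c \<in> gperp br e \<and> (\<forall>d\<in>gperp br e. ip2 e (\<lambda>x y. b x y - c x y) d = 0)" using c o by blast
next
  fix c' assume h: "c' \<in> gperp br e \<and> (\<forall>d\<in>gperp br e. ip2 e (\<lambda>x y. b x y - c' x y) d = 0)"
  define D where "D = (\<lambda>x y. c x y - c' x y)"
  have ac: "alt2 c" "alt2 c'" using c h by (auto simp: gperp_iff)
  have Dg: "D \<in> gperp br e" using c h unfolding D_def gperp_iff
    by (auto simp: mu_diff intro: alt2_diff)
  have "ip2 e (\<lambda>x y. b x y - c' x y) D - ip2 e (\<lambda>x y. b x y - c x y) D = 0"
    using Dg h o by simp
  hence "ip2 e D D = 0" by (simp add: ip2_def D_def sum_subtractf[symmetric] algebra_simps)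
  hence "\<forall>j<DIM('a). \<forall>k<DIM('a). D (e j) (e k) = 0" by (rule ip2_self_0)
  thus "c' = c" by (intro alt2_eq[OF ac(2) ac(1)]) (simp add: D_def)
qed

lemma proj_decomp:
  assumes b: "alt2 b"
  shows "\<exists>v. proj_gperp br e b = (\<lambda>x y. b x y - mus v x y)"
proof -
  obtain v where v: "L v = mu b" using L_surj by blast
  have g: "(\<lambda>x y. b x y - mus v x y) \<in> gperp br e"
    unfolding gperp_iff using v b by (simp add: alt2_diff mus_alt2 mu_diff L_def)
  have "proj_gperp br e b = (\<lambda>x y. b x y - mus v x y)"
  proof (rule proj_char[OF b g], intro ballI)
    fix d assume d: "d \<in> gperp br e"
    have "(\<lambda>x y. b x y - (b x y - mus v x y)) = mus v" by (simp add: fun_eq_iff)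
    thus "ip2 e (\<lambda>x y. b x y - (b x y - mus v x y)) d = 0"
      using d by (simp add: ip2_mus gperp_iff)
  qed
  thus ?thesis by blast
qed

lemma proj_zero_iff:
  assumes b: "alt2 b"
  shows "proj_gperp br e b = (\<lambda>x y. 0) \<longleftrightarrow> (\<exists>v. b = mus v)"
proof
  assume h: "proj_gperp br e b = (\<lambda>x y. 0)"
  obtain v where "proj_gperp br e b = (\<lambda>x y. b x y - mus v x y)" using proj_decomp[OF b] by blast
  with h have "b = mus v" by (simp add: fun_eq_iff)
  thus "\<exists>v. b = mus v" by blast
next
  assume "\<exists>v. b = mus v"
  then obtain w where w: "b = mus w" by blast
  show "proj_gperp br e b = (\<lambda>x y. 0)"
  proof (rule proj_char[OF b])
    show "(\<lambda>x y. 0) \<in> gperp br e" by (simp add: gperp_iff alt2_0 mu_def)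
    show "\<forall>d\<in>gperp br e. ip2 e (\<lambda>x y. b x y - 0) d = 0"
      using w by (simp add: ip2_mus gperp_iff)
  qed
qed

end

context CS begin

lemma tr_ad_zero: "trace_map (br u) = 0"
proof -
  obtain v where v: "L v = u" using L_surj by blast
  have "trace_map (br u) = trace_map (br (L v))" using v by simp
  also have "\<dots> = (\<Sum>j<DIM('a). \<Sum>k<DIM('a). mus v (e j) (e k) * trace_map (br (br (e j) (e k))))"
  proof -
    have s: "trace_map (br (sum g S)) = (\<Sum>i\<in>S. trace_map (br (g i)))" for g :: "nat \<Rightarrow> 'a" and S
      using linear_sum[OF tr_ad_lin, of g S] by simp
    have c: "trace_map (br (c *\<^sub>R w)) = c * trace_map (br w)" for c w
      using linear_scale[OF tr_ad_lin, of c w] by simp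
    show ?thesis unfolding L_def mu_def s c ..
  qed
  also have "\<dots> = 0" by (simp add: tr_ad_br)
  finally show ?thesis .
qed

end

locale CSphi = CS br e for br :: "'a::euclidean_space \<Rightarrow> 'a \<Rightarrow> 'a" and e +
  fixes phi :: "'a \<Rightarrow> 'a"
  assumes phi_lin: "linear phi" and cond: "\<And>x y. br (phi x) y = br x (phi y)"
begin

lemma phi_sym: "ip br (phi x) y = ip br x (phi y)"
proof -
  have lg: "linear (\<lambda>z. phi (br y z))" using linear_compose[OF lin_r phi_lin] by (simp add: o_def)
  have "killing br (phi x) y = trace_map (\<lambda>z. br x (phi (br y z)))"
    unfolding killing_def by (simp add: cond)
  also have "\<dots> = trace_map (\<lambda>z. phi (br y (br x z)))"
    using trace_cyclic[OF lin_r lg, of x] by simp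
  finally have 1: "killing br (phi x) y = trace_map (\<lambda>z. phi (br y (br x z)))" .
  have "killing br x (phi y) = trace_map (\<lambda>z. br x (br y (phi z)))"
    unfolding killing_def by (simp add: cond)
  also have "\<dots> = trace_map (\<lambda>z. phi (br x (br y z)))"
    using trace_cyclic[OF lin_rr phi_lin, of x y] by simp
  finally have 2: "killing br x (phi y) = trace_map (\<lambda>z. phi (br x (br y z)))" .
  have "killing br (phi x) y - killing br x (phi y) = trace_map (\<lambda>z. phi (br (br y x) z))"
    unfolding 1 2 trace_diff[symmetric] by (simp add: br_br linear_diff[OF phi_lin])
  also have "\<dots> = trace_map (\<lambda>z. br (br y x) (phi z))"
    using trace_cyclic[OF phi_lin lin_r, of "br y x"] by simp
  also have "\<dots> = trace_map (\<lambda>z. br (phi (br y x)) z)" by (simp add: cond)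
  also have "\<dots> = 0" using tr_ad_zero by (simp add: eta_contract_eq)
  finally show ?thesis by (simp add: ip_def)
qed

lemma phi_cent: "phi (br x y) = br (phi x) y"
proof -
  have "ip br (phi (br x y)) z = ip br (br (phi x) y) z" for z
  proof -
    have "ip br (phi (br x y)) z = ip br (br x y) (phi z)" by (rule phi_sym)
    also have "\<dots> = ip br x (br y (phi z))" by (simp add: ip_inv)
    also have "\<dots> = ip br x (br (phi y) z)" by (simp add: cond)
    also have "\<dots> = ip br (br x (phi y)) z" by (simp add: ip_inv)
    also have "\<dots> = ip br (br (phi x) y) z" by (simp add: cond)
    finally show ?thesis .
  qed
  hence "\<And>z. ip br (phi (br x y) - br (phi x) y) z = 0" by (simp add: ip_diff_l)
  thus ?thesis using ip_nondeg by (metis eq_iff_diff_eq_0)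
qed

end

context CSphi begin

lemma quad_form_zero:
  fixes a c :: real
  assumes "\<And>t. 2 * t * a + t * t * c \<ge> 0" "c \<ge> 0"
  shows "a = 0"
proof (rule ccontr)
  assume a: "a \<noteq> 0"
  define t where "t = - a / (c + 1)"
  have c1: "c + 1 > 0" using assms(2) by simp
  have e1: "2 * a + t * c = a * (c + 2) / (c + 1)"
    unfolding t_def using c1 by (simp add: field_simps)
  have "2 * t * a + t * t * c = t * (2 * a + t * c)" by (simp add: algebra_simps)
  also have "\<dots> = - (a * a * (c + 2) / ((c + 1) * (c + 1)))"
  proof -
    have n: "c + 1 \<noteq> 0" "1 + c \<noteq> 0" using c1 by auto
    show ?thesis unfolding e1 unfolding t_def using n by (simp add: field_simps)
  qed
  also have "\<dots> < 0" using a c1 assms(2)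
  proof -
    have "a * a > 0" using a by (simp add: zero_less_mult_iff) linarith
    hence "a * a * (c + 2) / ((c + 1) * (c + 1)) > 0" using c1 assms(2) by simp
    thus ?thesis by simp
  qed
  finally show False using assms(1)[of t] by simp
qed

lemma eigen: "\<exists>x0 lam. x0 \<noteq> 0 \<and> phi x0 = lam *\<^sub>R x0"
proof -
  define R where "R x = ip br (phi x) x / ip br x x" for x
  have cphi: "continuous_on S phi" for S using phi_lin linear_conv_bounded_linear linear_continuous_on by blast
  have cid: "continuous_on S (\<lambda>x::'a. x)" for S by (rule continuous_on_id)
  have cR: "continuous_on (sphere 0 1) R"
    unfolding R_def
  proof (rule continuous_on_divide)
    show "continuous_on (sphere 0 1) (\<lambda>x. ip br (phi x) x)"
      by (rule bilinear_continuous_on_compose[OF cphi cid ip_bil])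
    show "continuous_on (sphere 0 1) (\<lambda>x. ip br x x)"
      by (rule bilinear_continuous_on_compose[OF cid cid ip_bil])
    show "\<forall>x\<in>sphere 0 1. ip br x x \<noteq> 0"
    proof
      fix x :: 'a assume "x \<in> sphere 0 1" hence "x \<noteq> 0" by auto
      thus "ip br x x \<noteq> 0" using ip_pos[of x] by simp
    qed
  qed
  have ne: "sphere (0::'a) 1 \<noteq> {}"
  proof -
    obtain b :: 'a where "b \<in> Basis" using nonempty_Basis by blast
    hence "b \<in> sphere 0 1" by simp
    thus ?thesis by blast
  qed
  obtain x0 where x0: "x0 \<in> sphere 0 1" "\<And>y. y \<in> sphere 0 1 \<Longrightarrow> R y \<le> R x0"
    using continuous_attains_sup[OF compact_sphere ne cR] by blast
  define lam where "lam = R x0"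
  have x0nz: "x0 \<noteq> 0" using x0(1) by auto
  have hom: "ip br (phi (c *\<^sub>R y)) (c *\<^sub>R y) = c * c * ip br (phi y) y" "ip br (c *\<^sub>R y) (c *\<^sub>R y) = c * c * ip br y y" for c y
    by (simp_all add: linear_scale[OF phi_lin] ip_scale_l ip_scale_r)
  have le: "ip br (phi y) y \<le> lam * ip br y y" for y
  proof (cases "y = 0")
    case True thus ?thesis by simp
  next
    case False
    define c where "c = 1 / norm y"
    have cy: "c *\<^sub>R y \<in> sphere 0 1" using False by (simp add: c_def)
    have c0: "c \<noteq> 0" using False by (simp add: c_def)
    have py: "ip br y y > 0" using ip_pos[OF False] .
    have "R (c *\<^sub>R y) = R y" unfolding R_def hom using c0 by simp
    hence "R y \<le> lam" using x0(2)[OF cy] by (simp add: lam_def)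
    thus ?thesis using py unfolding R_def by (simp add: divide_le_eq)
  qed
  have px0: "ip br (phi x0) x0 = lam * ip br x0 x0"
    using ip_pos[OF x0nz] by (simp add: lam_def R_def)
  have orth: "ip br (lam *\<^sub>R x0 - phi x0) w = 0" for w
  proof -
    define a where "a = lam * ip br x0 w - ip br (phi x0) w"
    define c where "c = lam * ip br w w - ip br (phi w) w"
    have cnn: "c \<ge> 0" using le[of w] by (simp add: c_def)
    have "2 * t * a + t * t * c \<ge> 0" for t
    proof -
      have "ip br (phi (x0 + t *\<^sub>R w)) (x0 + t *\<^sub>R w) \<le> lam * ip br (x0 + t *\<^sub>R w) (x0 + t *\<^sub>R w)"
        by (rule le)
      moreover have "ip br (phi w) x0 = ip br (phi x0) w" using phi_sym[of w x0] ip_sym by simp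
      moreover have "ip br w x0 = ip br x0 w" by (rule ip_sym)
      ultimately show ?thesis using px0
        unfolding a_def c_def
        by (simp add: linear_add[OF phi_lin] linear_scale[OF phi_lin] ip_add_l ip_add_r ip_scale_l ip_scale_r algebra_simps)
    qed
    hence "a = 0" using quad_form_zero cnn by blast
    thus ?thesis by (simp add: a_def ip_diff_l ip_scale_l)
  qed
  have "lam *\<^sub>R x0 - phi x0 = 0" using ip_nondeg orth by blast
  thus ?thesis using x0nz by (metis eq_iff_diff_eq_0)
qed

lemma scalar: "\<exists>lam. \<forall>x. phi x = lam *\<^sub>R x"
proof -
  obtain x0 lam where x0: "x0 \<noteq> 0" "phi x0 = lam *\<^sub>R x0" using eigen by blast
  define I where "I = {x. phi x = lam *\<^sub>R x}"
  have sub: "subspace I"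
    unfolding subspace_def I_def
    by (simp add: linear_0[OF phi_lin] linear_add[OF phi_lin] linear_scale[OF phi_lin] scaleR_add_right)
  have "lie_ideal br I"
    unfolding lie_ideal_def using sub by (simp add: I_def phi_cent br_scale_l)
  hence "I = {0} \<or> I = UNIV" using cs by (simp add: compact_simple_def)
  moreover have "x0 \<in> I" using x0 by (simp add: I_def)
  ultimately have "I = UNIV" using x0 by auto
  thus ?thesis by (auto simp: I_def)
qed

end

context CS begin

lemma omega_mus: "(\<lambda>y z. c * omega_g br x y z) = mus ((- c) *\<^sub>R x)"
proof (intro ext)
  fix y z
  have "mus ((- c) *\<^sub>R x) y z = - c * ip br x (br y z)" by (simp add: mus_def ip_scale_l linear_neg[OF ip_lin_l])
  thus "c * omega_g br x y z = mus ((- c) *\<^sub>R x) y z" by (simp add: ip_def omega_g_def)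
qed

lemma omega_alt3: "alt3 (\<lambda>x y z. c * omega_g br x y z)"
  unfolding alt3_def
proof (intro conjI allI)
  fix x show "alt2 (\<lambda>y z. c * omega_g br x y z)" unfolding omega_mus by (rule mus_alt2)
next
  fix y z show "linear (\<lambda>x. c * omega_g br x y z)"
    unfolding omega_g_def using kill_lin_l[of "br y z"] by (simp add: linear_iff algebra_simps)
next
  fix x y z show "c * omega_g br x y z = - (c * omega_g br y x z)"
    unfolding omega_g_def kill_inv
    using br_anti[of x y] linear_neg[OF kill_lin_l[of z], of "br y x"] by simp
qed

lemma omega_ker: "Theta br e (\<lambda>x y z. c * omega_g br x y z) = (\<lambda>x y z. 0)"
proof -
  have "proj_gperp br e (\<lambda>y z. c * omega_g br (e i) y z) = (\<lambda>x y. 0)" for i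
    using proj_zero_iff[OF mus_alt2[of "(- c) *\<^sub>R e i"]] unfolding omega_mus by blast
  thus ?thesis unfolding Theta_def by (simp add: fun_eq_iff)
qed

lemma ker_sub:
  assumes T: "alt3 T" and th: "Theta br e T = (\<lambda>x y z. 0)"
  shows "\<exists>c. T = (\<lambda>x y z. c * omega_g br x y z)"
proof -
  have a2: "alt2 (T x)" for x using T unfolding alt3_def by blast
  have tl: "linear (\<lambda>x. T x y z)" for y z using T unfolding alt3_def by blast
  have ta: "T x y z = - T y x z" for x y z using T unfolding alt3_def by blast
  have "\<exists>v. T (e k) = mus v" if k: "k < DIM('a)" for k
  proof -
    have "proj_gperp br e (T (e k)) = (\<lambda>x y. 0)"
    proof (intro ext)
      fix y z
      have "0 = Theta br e T (e k) y z" using th by simp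
      also have "\<dots> = (\<Sum>i<DIM('a). (if i = k then proj_gperp br e (T (e i)) y z else 0))"
        unfolding Theta_def using k by (intro sum.cong) (auto simp: onb_ip)
      also have "\<dots> = proj_gperp br e (T (e k)) y z" using k by simp
      finally show "proj_gperp br e (T (e k)) y z = 0" by simp
    qed
    thus ?thesis using proj_zero_iff[OF a2] by blast
  qed
  then obtain V where V: "\<And>k. k < DIM('a) \<Longrightarrow> T (e k) = mus (V k)" by metis
  define phi where "phi x = (\<Sum>k<DIM('a). ip br (e k) x *\<^sub>R V k)" for x
  have phil: "linear phi" unfolding phi_def linear_iff
    by (simp add: ip_add_r ip_scale_r scaleR_add_left sum.distrib scaleR_sum_right)
  have Tphi: "T x y z = ip br (phi x) (br y z)" for x y z
  proof -
    have "T x y z = (\<Sum>k<DIM('a). ip br (e k) x *\<^sub>R T (e k) y z)"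
      using lin_expand[OF tl[of y z], of x] by simp
    also have "\<dots> = (\<Sum>k<DIM('a). ip br (e k) x * ip br (V k) (br y z))"
      by (intro sum.cong) (auto simp: V mus_def)
    also have "\<dots> = ip br (phi x) (br y z)"
      unfolding phi_def by (simp add: ip_sum_l ip_scale_l)
    finally show ?thesis .
  qed
  have cond: "br (phi x) y = br x (phi y)" for x y
  proof -
    have "ip br (br (phi x) y - br x (phi y)) z = 0" for z
    proof -
      have "ip br (br (phi x) y) z = T x y z" by (simp add: Tphi ip_inv)
      also have "\<dots> = - T y x z" by (rule ta)
      also have "\<dots> = - ip br (br (phi y) x) z" by (simp add: Tphi ip_inv)
      also have "\<dots> = ip br (br x (phi y)) z" using br_anti[of x "phi y"] by (simp add: ip_def linear_neg[OF kill_lin_l])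
      finally show ?thesis by (simp add: ip_diff_l)
    qed
    thus ?thesis using ip_nondeg by (metis eq_iff_diff_eq_0)
  qed
  interpret P: CSphi br e phi by unfold_locales (auto simp: cond linear_add[OF phil] linear_scale[OF phil])
  obtain lam where lam: "\<And>x. phi x = lam *\<^sub>R x" using P.scalar by blast
  have "T = (\<lambda>x y z. (- lam) * omega_g br x y z)"
    by (simp add: fun_eq_iff Tphi lam omega_g_def ip_def linear_scale[OF kill_lin_l])
  thus ?thesis by blast
qed

end

theorem lemma4p11:
  fixes br :: "'a::euclidean_space \<Rightarrow> 'a \<Rightarrow> 'a" and e :: "nat \<Rightarrow> 'a"
  assumes "compact_simple br"
    and "DIM('a) \<ge> 8"
    and "orthonormal_basis br e"
  shows "{T. alt3 T \<and> Theta br e T = (\<lambda>x y z. 0)} = {(\<lambda>x y z. c * omega_g br x y z) | c. True}"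
proof -
  interpret CS br e using assms by unfold_locales
  show ?thesis
  proof (intro equalityI subsetI)
    fix T assume "T \<in> {T. alt3 T \<and> Theta br e T = (\<lambda>x y z. 0)}"
    then obtain c where "T = (\<lambda>x y z. c * omega_g br x y z)" using ker_sub by blast
    thus "T \<in> {(\<lambda>x y z. c * omega_g br x y z) | c. True}" by blast
  next
    fix T assume "T \<in> {(\<lambda>x y z. c * omega_g br x y z) | c. True}"
    then obtain c where T: "T = (\<lambda>x y z. c * omega_g br x y z)" by blast
    show "T \<in> {T. alt3 T \<and> Theta br e T = (\<lambda>x y z. 0)}"
      unfolding T using omega_alt3[of c] omega_ker[of c] by simp
  qed
qed


end
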